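(* Let $[X,d,m]$ be an $m$-connected metric random walk space with invariant and reversible probability measure $\nu$. If $-\Delta_m$, as an operator on $H(X,\nu)$, is the sum of an invertible operator and a compact operator, then ${\rm gap}(-\Delta_m)>0$.
   Context: A metric random walk space $[X,d,m]$ is a Polish metric space $(X,d)$ with a family $m=(m_x)_{x\in X}$ of Borel probability measures, $x\mapsto m_x(A)$ Borel measurable, each with finite first moment. A Radon measure $\nu$ is invariant if $\nu(A)=\int_X m_x(A)d\nu(x)$ for all $\nu$-measurable $A$, reversible if $dm_x(y)d\nu(x)=dm_y(x)d\nu(y)$. Iterates $m_x^{*1}=m_x$, $m_x^{*n}(A)=\int_X m_z(A)dm_x^{*(n-1)}(z)$; the space is $m$-connected if $\nu(\{x: m_x^{*n}(D)=0\ \forall n\})=0$ for every $\nu$-measurable $D$ with $0<\nu(D)<\infty$. $\Delta_m f(x)=\int_X(f(y)-f(x))dm_x(y)$ (a bounded operator on $L^2(X,\nu)$ here). $H(X,\nu)=\{f\in L^2(X,\nu):\int_X f\,d\nu=0\}$, which is invariant under $\Delta_m$. With $\mathcal H_m(f)=\frac12\iint(f(y)-f(x))^2dm_x(y)d\nu(x)$ and ${\rm Var}_\nu(f)=\int_X(f-\int f d\nu)^2d\nu$, the spectral gap is ${\rm gap}(-\Delta_m)=\inf\{\mathcal H_m(f)/{\rm Var}_\nu(f): f\in L^2(X,\nu),\ {\rm Var}_\nu(f)\neq0\}$. *)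

theory Defs
  imports "HOL-Probability.Probability"
begin

text \<open>Metric random walk space: (X,d) Polish (type class polish_space, d = dist),
  each m x a Borel probability measure with finite first moment, and x |-> m x A
  Borel measurable for every Borel set A.\<close>
definition mrw_space :: "('a::polish_space \<Rightarrow> 'a measure) \<Rightarrow> bool" where
  "mrw_space m \<longleftrightarrow>
     (\<forall>x. prob_space (m x) \<and> sets (m x) = sets borel \<and> integrable (m x) (\<lambda>y. dist x y)) \<and>
     (\<forall>A\<in>sets borel. (\<lambda>x. emeasure (m x) A) \<in> borel_measurable borel)"

definition invariant_measure :: "('a::polish_space \<Rightarrow> 'a measure) \<Rightarrow> 'a measure \<Rightarrow> bool" where
  "invariant_measure m \<nu> \<longleftrightarrow>
     (\<forall>A\<in>sets borel. emeasure \<nu> A = (\<integral>\<^sup>+x. emeasure (m x) A \<partial>\<nu>))"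

text \<open>Reversibility: the measures dm_x(y) d nu(x) and dm_y(x) d nu(y) on X x X coincide.\<close>
definition reversible_measure :: "('a::polish_space \<Rightarrow> 'a measure) \<Rightarrow> 'a measure \<Rightarrow> bool" where
  "reversible_measure m \<nu> \<longleftrightarrow>
     (\<forall>C\<in>sets (borel \<Otimes>\<^sub>M borel).
        (\<integral>\<^sup>+x. emeasure (m x) {y. (x, y) \<in> C} \<partial>\<nu>) = (\<integral>\<^sup>+x. emeasure (m x) {y. (y, x) \<in> C} \<partial>\<nu>))"

text \<open>Iterates: m_iter m n x is the (n+1)-st iterate m_x^{*(n+1)}.\<close>
fun m_iter :: "('a::polish_space \<Rightarrow> 'a measure) \<Rightarrow> nat \<Rightarrow> 'a \<Rightarrow> 'a measure" where
  "m_iter m 0 x = m x"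
| "m_iter m (Suc n) x =
     measure_of UNIV (sets borel) (\<lambda>A. \<integral>\<^sup>+z. emeasure (m z) A \<partial>(m_iter m n x))"

definition m_connected :: "('a::polish_space \<Rightarrow> 'a measure) \<Rightarrow> 'a measure \<Rightarrow> bool" where
  "m_connected m \<nu> \<longleftrightarrow>
     (\<forall>D\<in>sets borel. 0 < emeasure \<nu> D \<and> emeasure \<nu> D < \<infinity> \<longrightarrow>
        emeasure \<nu> {x. \<forall>n. emeasure (m_iter m n x) D = 0} = 0)"

definition laplacian :: "('a::polish_space \<Rightarrow> 'a measure) \<Rightarrow> ('a \<Rightarrow> real) \<Rightarrow> 'a \<Rightarrow> real" where
  "laplacian m f x = (\<integral>y. (f y - f x) \<partial>(m x))"

definition L2 :: "'a measure \<Rightarrow> ('a \<Rightarrow> real) set" where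
  "L2 \<nu> = {f. f \<in> borel_measurable \<nu> \<and> integrable \<nu> (\<lambda>x. (f x)\<^sup>2)}"

definition H0 :: "'a measure \<Rightarrow> ('a \<Rightarrow> real) set" where
  "H0 \<nu> = {f \<in> L2 \<nu>. (\<integral>x. f x \<partial>\<nu>) = 0}"

definition l2norm :: "'a measure \<Rightarrow> ('a \<Rightarrow> real) \<Rightarrow> real" where
  "l2norm \<nu> f = sqrt (\<integral>x. (f x)\<^sup>2 \<partial>\<nu>)"

text \<open>Bounded linear operators on H(X,nu), with functions identified up to nu-a.e. equality.\<close>
definition bounded_op_on :: "'a measure \<Rightarrow> (('a \<Rightarrow> real) \<Rightarrow> ('a \<Rightarrow> real)) \<Rightarrow> bool" where
  "bounded_op_on \<nu> T \<longleftrightarrow>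
     (\<forall>f\<in>H0 \<nu>. T f \<in> H0 \<nu>) \<and>
     (\<forall>f\<in>H0 \<nu>. \<forall>g\<in>H0 \<nu>. (AE x in \<nu>. f x = g x) \<longrightarrow> (AE x in \<nu>. T f x = T g x)) \<and>
     (\<forall>f\<in>H0 \<nu>. \<forall>g\<in>H0 \<nu>. \<forall>a b::real.
        AE x in \<nu>. T (\<lambda>y. a * f y + b * g y) x = a * T f x + b * T g x) \<and>
     (\<exists>C. \<forall>f\<in>H0 \<nu>. l2norm \<nu> (T f) \<le> C * l2norm \<nu> f)"

definition invertible_op_on :: "'a measure \<Rightarrow> (('a \<Rightarrow> real) \<Rightarrow> ('a \<Rightarrow> real)) \<Rightarrow> bool" where
  "invertible_op_on \<nu> S \<longleftrightarrow> bounded_op_on \<nu> S \<and>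
     (\<exists>R. bounded_op_on \<nu> R \<and>
        (\<forall>f\<in>H0 \<nu>. (AE x in \<nu>. R (S f) x = f x) \<and> (AE x in \<nu>. S (R f) x = f x)))"

definition compact_op_on :: "'a measure \<Rightarrow> (('a \<Rightarrow> real) \<Rightarrow> ('a \<Rightarrow> real)) \<Rightarrow> bool" where
  "compact_op_on \<nu> K \<longleftrightarrow> bounded_op_on \<nu> K \<and>
     (\<forall>u::nat \<Rightarrow> 'a \<Rightarrow> real. (\<forall>n. u n \<in> H0 \<nu>) \<and> (\<exists>B. \<forall>n. l2norm \<nu> (u n) \<le> B) \<longrightarrow>
        (\<exists>r g. strict_mono r \<and> g \<in> H0 \<nu> \<and>
           (\<lambda>n. l2norm \<nu> (\<lambda>x. K (u (r n)) x - g x)) \<longlonglongrightarrow> 0))"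

definition energy :: "('a::polish_space \<Rightarrow> 'a measure) \<Rightarrow> 'a measure \<Rightarrow> ('a \<Rightarrow> real) \<Rightarrow> real" where
  "energy m \<nu> f = 1/2 * (\<integral>x. (\<integral>y. (f y - f x)\<^sup>2 \<partial>(m x)) \<partial>\<nu>)"

definition variance_nu :: "'a measure \<Rightarrow> ('a \<Rightarrow> real) \<Rightarrow> real" where
  "variance_nu \<nu> f = (\<integral>x. (f x - (\<integral>z. f z \<partial>\<nu>))\<^sup>2 \<partial>\<nu>)"

text \<open>Spectral gap as an extended real (infimum of the empty set is +infinity).\<close>
definition spectral_gap :: "('a::polish_space \<Rightarrow> 'a measure) \<Rightarrow> 'a measure \<Rightarrow> ereal" where
  "spectral_gap m \<nu> =
     (INF f\<in>{f \<in> L2 \<nu>. variance_nu \<nu> f \<noteq> 0}. ereal (energy m \<nu> f / variance_nu \<nu> f))"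

end

theory Submission
  imports Defs
begin

locale mrw =
  fixes m :: "'a::polish_space \<Rightarrow> 'a measure" and nu :: "'a measure"
  assumes mrw: "mrw_space m" and P: "prob_space nu" and S: "sets nu = sets borel"
    and I: "invariant_measure m nu"
begin

lemma mx: "prob_space (m x)" "sets (m x) = sets borel" "integrable (m x) (\<lambda>y. dist x y)"
  using mrw unfolding mrw_space_def by auto

lemma space_mx[simp]: "space (m x) = UNIV"
  using sets_eq_imp_space_eq[OF mx(2)] by simp

lemma space_nu[simp]: "space nu = UNIV"
  using sets_eq_imp_space_eq[OF S] by simp

lemma meas_nu_iff: "f \<in> borel_measurable nu \<longleftrightarrow> f \<in> borel_measurable borel"
  by (simp add: measurable_cong_sets[OF S refl])

lemma kern: "m \<in> measurable borel (subprob_algebra borel)"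
  apply (rule measurable_subprob_algebra)
  using mrw mx unfolding mrw_space_def by (auto intro: prob_space_imp_subprob_space)

lemma kern_nu: "m \<in> measurable nu (subprob_algebra borel)"
  using kern measurable_cong_sets[OF S refl] by blast

lemma bind_eq: "nu \<bind> m = nu"
proof (rule measure_eqI)
  show "sets (nu \<bind> m) = sets nu"
    using S mx by (subst sets_bind[where N=borel]) auto
  fix A assume "A \<in> sets (nu \<bind> m)"
  then have A: "A \<in> sets borel" using S mx by (subst (asm) sets_bind[where N=borel]) auto
  have "emeasure (nu \<bind> m) A = (\<integral>\<^sup>+x. emeasure (m x) A \<partial>nu)"
    by (rule emeasure_bind[OF _ kern_nu A]) simp
  also have "\<dots> = emeasure nu A" using I A unfolding invariant_measure_def by auto
  finally show "emeasure (nu \<bind> m) A = emeasure nu A" .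
qed

lemma nn_inv:
  assumes "g \<in> borel_measurable borel"
  shows "(\<integral>\<^sup>+x. \<integral>\<^sup>+y. g y \<partial>m x \<partial>nu) = (\<integral>\<^sup>+x. g x \<partial>nu)"
  using nn_integral_bind[OF assms kern_nu] bind_eq by simp

lemma meas2:
  fixes f :: "'a \<Rightarrow> 'a \<Rightarrow> real"
  assumes f[measurable]: "(\<lambda>(x,y). f x y) \<in> borel_measurable (borel \<Otimes>\<^sub>M borel)"
  shows "(\<lambda>x. \<integral>y. f x y \<partial>m x) \<in> borel_measurable borel"
proof -
  note integral_measurable_subprob_algebra[measurable] measurable_distr2[measurable] kern[measurable]
  have "(\<lambda>x. integral\<^sup>L (distr (m x) (borel \<Otimes>\<^sub>M borel) (\<lambda>y. (x, y))) (\<lambda>(x, y). f x y)) \<in> borel_measurable borel"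
    by measurable
  moreover have "integral\<^sup>L (distr (m x) (borel \<Otimes>\<^sub>M borel) (\<lambda>y. (x, y))) (\<lambda>(x, y). f x y) = (\<integral>y. f x y \<partial>m x)" for x
    by (subst integral_distr) (auto simp: measurable_cong_sets[OF mx(2) refl])
  ultimately show ?thesis by simp
qed


lemma sq_bound: "((a::real) + b)^2 \<le> 2*a^2 + 2*b^2"
proof -
  have "(a+b)^2 + (a-b)^2 = 2*a^2+2*b^2" by (simp add: power2_eq_square algebra_simps)
  moreover have "0 \<le> (a-b)^2" by simp
  ultimately show ?thesis by linarith
qed

lemma F: "finite_measure nu" by (rule prob_space.axioms(1)[OF P])

lemma L2_meas: "f \<in> L2 nu \<Longrightarrow> f \<in> borel_measurable borel"
  unfolding L2_def using meas_nu_iff by auto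

lemma L2_sq: "f \<in> L2 nu \<Longrightarrow> integrable nu (\<lambda>x. (f x)^2)"
  unfolding L2_def by auto

lemma L2_int: "f \<in> L2 nu \<Longrightarrow> integrable nu f"
proof -
  assume "f \<in> L2 nu"
  then have "f \<in> borel_measurable nu" "integrable nu (\<lambda>x. (f x)^2)" unfolding L2_def by auto
  then show ?thesis by (rule finite_measure.square_integrable_imp_integrable[OF F])
qed

lemma L2_I: "f \<in> borel_measurable borel \<Longrightarrow> integrable nu (\<lambda>x. (f x)^2) \<Longrightarrow> f \<in> L2 nu"
  unfolding L2_def using meas_nu_iff by auto

lemma L2_const: "(\<lambda>x. c) \<in> L2 nu"
  by (rule L2_I) (auto intro: finite_measure.integrable_const[OF F])

lemma L2_lin:
  assumes "f \<in> L2 nu" "g \<in> L2 nu"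
  shows "(\<lambda>x. a * f x + b * g x) \<in> L2 nu"
proof (rule L2_I)
  note [measurable] = L2_meas[OF assms(1)] L2_meas[OF assms(2)]
  show "(\<lambda>x. a * f x + b * g x) \<in> borel_measurable borel" by measurable
  show "integrable nu (\<lambda>x. (a * f x + b * g x)^2)"
  proof -
    have 1: "integrable nu (\<lambda>x. 2 * a^2 * (f x)^2 + 2 * b^2 * (g x)^2)"
      using L2_sq[OF assms(1)] L2_sq[OF assms(2)] by auto
    have 2: "(\<lambda>x. (a * f x + b * g x)^2) \<in> borel_measurable nu"
      unfolding meas_nu_iff by measurable
    have 3: "AE x in nu. norm ((a * f x + b * g x)^2) \<le> norm (2 * a^2 * (f x)^2 + 2 * b^2 * (g x)^2)"
      using sq_bound[of "a * f x" "b * g x" for x] by (auto intro!: AE_I2 simp: power_mult_distrib mult.assoc)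
    show ?thesis by (rule Bochner_Integration.integrable_bound[OF 1 2 3])
  qed
qed

lemma L2_add: "f \<in> L2 nu \<Longrightarrow> g \<in> L2 nu \<Longrightarrow> (\<lambda>x. f x + g x) \<in> L2 nu"
  using L2_lin[of f g 1 1] by simp
lemma L2_diff: "f \<in> L2 nu \<Longrightarrow> g \<in> L2 nu \<Longrightarrow> (\<lambda>x. f x - g x) \<in> L2 nu"
  using L2_lin[of f g 1 "-1"] by simp
lemma L2_neg: "f \<in> L2 nu \<Longrightarrow> (\<lambda>x. - f x) \<in> L2 nu"
  using L2_lin[of f f "-1" 0] by simp

lemma sq_add:
  assumes "f \<in> L2 nu" "g \<in> L2 nu"
  shows "(\<integral>x. (f x + g x)^2 \<partial>nu) \<le> 2 * (\<integral>x. (f x)^2 \<partial>nu) + 2 * (\<integral>x. (g x)^2 \<partial>nu)"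
proof -
  have "(\<integral>x. (f x + g x)^2 \<partial>nu) \<le> (\<integral>x. 2 * (f x)^2 + 2 * (g x)^2 \<partial>nu)"
    apply (rule integral_mono)
    using L2_sq[OF L2_add[OF assms]] L2_sq[OF assms(1)] L2_sq[OF assms(2)] sq_bound by auto
  also have "\<dots> = 2 * (\<integral>x. (f x)^2 \<partial>nu) + 2 * (\<integral>x. (g x)^2 \<partial>nu)"
    using L2_sq[OF assms(1)] L2_sq[OF assms(2)] by simp
  finally show ?thesis .
qed

lemma kint:
  fixes g :: "'a \<Rightarrow> real"
  assumes g[measurable]: "g \<in> borel_measurable borel" and nn: "\<And>x. 0 \<le> g x" and ig: "integrable nu g"
  shows "AE x in nu. integrable (m x) g"
    and "integrable nu (\<lambda>x. \<integral>y. g y \<partial>m x)"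
    and "(\<integral>x. (\<integral>y. g y \<partial>m x) \<partial>nu) = (\<integral>x. g x \<partial>nu)"
proof -
  have gm: "g \<in> borel_measurable (m x)" for x by (subst measurable_cong_sets[OF mx(2)[of x] refl]) (rule g)
  have fin: "(\<integral>\<^sup>+x. g x \<partial>nu) < \<infinity>"
    using ig nn by (simp add: integrable_iff_bounded)
  have eq: "(\<integral>\<^sup>+x. \<integral>\<^sup>+y. g y \<partial>m x \<partial>nu) = (\<integral>\<^sup>+x. g x \<partial>nu)"
    by (rule nn_inv) simp
  have m1: "(\<lambda>x. \<integral>\<^sup>+y. g y \<partial>m x) \<in> borel_measurable nu"
    using nn_integral_measurable_subprob_algebra2[where f="\<lambda>x y. ennreal (g y)" and M=nu and N=borel and L=m] kern_nu
    by (simp add: measurable_cong_sets[OF S refl])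
  have "AE x in nu. (\<integral>\<^sup>+y. g y \<partial>m x) \<noteq> \<infinity>"
    by (rule nn_integral_PInf_AE[OF m1]) (use eq fin in simp)
  then show ae: "AE x in nu. integrable (m x) g"
    by eventually_elim (auto intro!: integrableI_nonneg gm nn simp: less_top)
  have m2: "(\<lambda>x. \<integral>y. g y \<partial>m x) \<in> borel_measurable nu"
    using meas2[of "\<lambda>x y. g y"] by (simp add: meas_nu_iff)
  have eq2: "(\<integral>\<^sup>+x. ennreal (\<integral>y. g y \<partial>m x) \<partial>nu) = (\<integral>\<^sup>+x. g x \<partial>nu)"
    unfolding eq[symmetric]
    apply (rule nn_integral_cong_AE)
    using ae by eventually_elim (simp add: nn_integral_eq_integral nn)
  show "integrable nu (\<lambda>x. \<integral>y. g y \<partial>m x)"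
    by (rule integrableI_nonneg[OF m2]) (use eq2 fin nn in \<open>auto intro: integral_nonneg\<close>)
  have "(\<integral>x. (\<integral>y. g y \<partial>m x) \<partial>nu) = enn2real (\<integral>\<^sup>+x. ennreal (\<integral>y. g y \<partial>m x) \<partial>nu)"
    by (rule integral_eq_nn_integral[OF m2]) (simp add: nn integral_nonneg)
  also have "\<dots> = enn2real (\<integral>\<^sup>+x. g x \<partial>nu)" using eq2 by simp
  also have "\<dots> = (\<integral>x. g x \<partial>nu)"
  proof -
    have gnu: "g \<in> borel_measurable nu" using assms(1) by (simp add: meas_nu_iff)
    show ?thesis using integral_eq_nn_integral[OF gnu] nn by simp
  qed
  finally show "(\<integral>x. (\<integral>y. g y \<partial>m x) \<partial>nu) = (\<integral>x. g x \<partial>nu)" .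
qed

lemma mx_fin: "finite_measure (m x)" by (rule prob_space.axioms(1)[OF mx(1)])

lemma mx_int_const: "(\<integral>y. c \<partial>m x) = (c::real)"
  using prob_space.prob_space[OF mx(1)[of x]] by (simp add: lebesgue_integral_const)

lemma mx_integrable_const: "integrable (m x) (\<lambda>y. c::real)"
  by (rule finite_measure.integrable_const[OF mx_fin])

lemma meas_mx: "g \<in> borel_measurable borel \<Longrightarrow> g \<in> borel_measurable (m x)"
  by (subst measurable_cong_sets[OF mx(2)[of x] refl])

lemma jensen_sq:
  fixes h :: "'b \<Rightarrow> real"
  assumes "prob_space M" "integrable M h" "integrable M (\<lambda>x. (h x)^2)"
  shows "(\<integral>x. h x \<partial>M)^2 \<le> (\<integral>x. (h x)^2 \<partial>M)"
proof -
  have "0 \<le> (\<integral>x. (h x - (\<integral>x. h x \<partial>M))^2 \<partial>M)" by (rule Bochner_Integration.integral_nonneg) simp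
  then show ?thesis using prob_space.variance_eq[OF assms] by simp
qed

lemma phi_pt:
  fixes f :: "'a \<Rightarrow> real"
  assumes f[measurable]: "f \<in> borel_measurable borel" and i: "integrable (m x) (\<lambda>y. (f y)^2)"
  shows "integrable (m x) (\<lambda>y. (f y - f x)^2)"
    and "(\<integral>y. (f y - f x)^2 \<partial>m x) \<le> 2 * (\<integral>y. (f y)^2 \<partial>m x) + 2 * (f x)^2"
    and "integrable (m x) f"
proof -
  have ib: "integrable (m x) (\<lambda>y. 2 * (f y)^2 + 2 * (f x)^2)"
    using i mx_integrable_const by auto
  have bd: "(f y - f x)^2 \<le> 2 * (f y)^2 + 2 * (f x)^2" for y
    using sq_bound[of "f y" "- f x"] by simp
  show i2: "integrable (m x) (\<lambda>y. (f y - f x)^2)"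
    apply (rule Bochner_Integration.integrable_bound[OF ib])
     apply (rule meas_mx, measurable)
    using bd by (auto intro!: AE_I2)
  have "(\<integral>y. (f y - f x)^2 \<partial>m x) \<le> (\<integral>y. 2 * (f y)^2 + 2 * (f x)^2 \<partial>m x)"
    by (rule integral_mono[OF i2 ib bd])
  also have "\<dots> = 2 * (\<integral>y. (f y)^2 \<partial>m x) + 2 * (f x)^2"
    using i mx_int_const mx_integrable_const by simp
  finally show "(\<integral>y. (f y - f x)^2 \<partial>m x) \<le> 2 * (\<integral>y. (f y)^2 \<partial>m x) + 2 * (f x)^2" .
  show "integrable (m x) f"
    by (rule finite_measure.square_integrable_imp_integrable[OF mx_fin meas_mx[OF f] i])
qed

lemma phi_props:
  assumes fL: "f \<in> L2 nu"
  shows "AE x in nu. integrable (m x) (\<lambda>y. (f y)^2)"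
    and "AE x in nu. integrable (m x) f"
    and "AE x in nu. integrable (m x) (\<lambda>y. (f y - f x)^2)"
    and "integrable nu (\<lambda>x. \<integral>y. (f y - f x)^2 \<partial>m x)"
    and "(\<integral>x. (\<integral>y. (f y - f x)^2 \<partial>m x) \<partial>nu) \<le> 4 * (\<integral>x. (f x)^2 \<partial>nu)"
proof -
  note f[measurable] = L2_meas[OF fL]
  have k: "AE x in nu. integrable (m x) (\<lambda>y. (f y)^2)"
     "integrable nu (\<lambda>x. \<integral>y. (f y)^2 \<partial>m x)"
     "(\<integral>x. (\<integral>y. (f y)^2 \<partial>m x) \<partial>nu) = (\<integral>x. (f x)^2 \<partial>nu)"
    using kint[of "\<lambda>y. (f y)^2"] L2_sq[OF fL] by auto
  show "AE x in nu. integrable (m x) (\<lambda>y. (f y)^2)" by (rule k(1))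
  show "AE x in nu. integrable (m x) f" using k(1) phi_pt(3)[OF f] by auto
  show "AE x in nu. integrable (m x) (\<lambda>y. (f y - f x)^2)" using k(1) phi_pt(1)[OF f] by auto
  have ps: "integrable nu (\<lambda>x. 2 * (\<integral>y. (f y)^2 \<partial>m x) + 2 * (f x)^2)"
    using k(2) L2_sq[OF fL] by auto
  have pm: "(\<lambda>x. \<integral>y. (f y - f x)^2 \<partial>m x) \<in> borel_measurable borel"
    by (rule meas2) measurable
  have bd: "AE x in nu. (\<integral>y. (f y - f x)^2 \<partial>m x) \<le> 2 * (\<integral>y. (f y)^2 \<partial>m x) + 2 * (f x)^2"
    using k(1) phi_pt(2)[OF f] by auto
  show pi: "integrable nu (\<lambda>x. \<integral>y. (f y - f x)^2 \<partial>m x)"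
    apply (rule Bochner_Integration.integrable_bound[OF ps])
    apply (subst meas_nu_iff, rule pm)
    using bd by eventually_elim (auto intro: integral_nonneg)
  have "(\<integral>x. (\<integral>y. (f y - f x)^2 \<partial>m x) \<partial>nu) \<le> (\<integral>x. 2 * (\<integral>y. (f y)^2 \<partial>m x) + 2 * (f x)^2 \<partial>nu)"
    by (rule integral_mono_AE[OF pi ps bd])
  also have "\<dots> = 4 * (\<integral>x. (f x)^2 \<partial>nu)"
    using k(2,3) L2_sq[OF fL] by simp
  finally show "(\<integral>x. (\<integral>y. (f y - f x)^2 \<partial>m x) \<partial>nu) \<le> 4 * (\<integral>x. (f x)^2 \<partial>nu)" .
qed

lemma energy_nonneg: "0 \<le> energy m nu f"
  unfolding energy_def by (auto intro!: integral_nonneg)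

lemma energy_le: "f \<in> L2 nu \<Longrightarrow> energy m nu f \<le> 2 * (\<integral>x. (f x)^2 \<partial>nu)"
  unfolding energy_def using phi_props(5)[of f] by simp

lemma energy_scale: "energy m nu (\<lambda>x. a * (f x - c)) = a^2 * energy m nu f"
proof -
  have "(a * (f y - c) - a * (f x - c))^2 = a^2 * (f y - f x)^2" for x y
    by (simp add: power2_eq_square algebra_simps)
  then show ?thesis unfolding energy_def by simp
qed

lemma energy_add:
  assumes fL: "f \<in> L2 nu" and gL: "g \<in> L2 nu"
  shows "energy m nu (\<lambda>x. f x + g x) \<le> 2 * energy m nu f + 2 * energy m nu g"
proof -
  have hL: "(\<lambda>x. f x + g x) \<in> L2 nu" by (rule L2_add[OF fL gL])
  have bd: "AE x in nu. (\<integral>y. ((f y + g y) - (f x + g x))^2 \<partial>m x) \<le>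
      2 * (\<integral>y. (f y - f x)^2 \<partial>m x) + 2 * (\<integral>y. (g y - g x)^2 \<partial>m x)"
    using phi_props(3)[OF fL] phi_props(3)[OF gL] phi_props(3)[OF hL]
  proof eventually_elim
    case (elim x)
    have "(\<integral>y. ((f y + g y) - (f x + g x))^2 \<partial>m x) \<le>
        (\<integral>y. 2 * (f y - f x)^2 + 2 * (g y - g x)^2 \<partial>m x)"
      apply (rule integral_mono)
      using elim apply auto[2]
      using sq_bound[of "f y - f x" "g y - g x" for y] by (simp add: algebra_simps)
    also have "\<dots> = 2 * (\<integral>y. (f y - f x)^2 \<partial>m x) + 2 * (\<integral>y. (g y - g x)^2 \<partial>m x)"
      using elim by simp
    finally show ?case .
  qed
  have "(\<integral>x. (\<integral>y. ((f y + g y) - (f x + g x))^2 \<partial>m x) \<partial>nu) \<le>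
      (\<integral>x. 2 * (\<integral>y. (f y - f x)^2 \<partial>m x) + 2 * (\<integral>y. (g y - g x)^2 \<partial>m x) \<partial>nu)"
    apply (rule integral_mono_AE[OF _ _ bd])
    using phi_props(4)[OF fL] phi_props(4)[OF gL] phi_props(4)[OF hL] by auto
  also have "\<dots> = 2 * (\<integral>x. (\<integral>y. (f y - f x)^2 \<partial>m x) \<partial>nu) + 2 * (\<integral>x. (\<integral>y. (g y - g x)^2 \<partial>m x) \<partial>nu)"
    using phi_props(4)[OF fL] phi_props(4)[OF gL] by simp
  finally show ?thesis unfolding energy_def by simp
qed

lemma energy_zero:
  assumes fL: "f \<in> L2 nu" and e: "energy m nu f = 0"
  shows "AE x in nu. AE y in m x. f y = f x"
proof -
  have "(\<integral>x. (\<integral>y. (f y - f x)^2 \<partial>m x) \<partial>nu) = 0" using e unfolding energy_def by simp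
  then have "AE x in nu. (\<integral>y. (f y - f x)^2 \<partial>m x) = 0"
    using integral_nonneg_eq_0_iff_AE[OF phi_props(4)[OF fL]] by (auto intro: integral_nonneg)
  with phi_props(3)[OF fL] show ?thesis
  proof eventually_elim
    case (elim x)
    then have "AE y in m x. (f y - f x)^2 = 0"
      using integral_nonneg_eq_0_iff_AE[of "m x" "\<lambda>y. (f y - f x)^2"] by auto
    then show ?case by eventually_elim simp
  qed
qed

lemma lap_props:
  assumes fL: "f \<in> L2 nu"
  shows "laplacian m f \<in> L2 nu" and "(\<integral>x. (laplacian m f x)^2 \<partial>nu) \<le> 2 * energy m nu f"
proof -
  note f[measurable] = L2_meas[OF fL]
  have lm[measurable]: "laplacian m f \<in> borel_measurable borel"
    unfolding laplacian_def by (rule meas2) measurable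
  have bd: "AE x in nu. (laplacian m f x)^2 \<le> (\<integral>y. (f y - f x)^2 \<partial>m x)"
    using phi_props(2)[OF fL] phi_props(3)[OF fL]
  proof eventually_elim
    case (elim x)
    show ?case unfolding laplacian_def
      by (rule jensen_sq[OF mx(1)]) (use elim mx_integrable_const in auto)
  qed
  have li: "integrable nu (\<lambda>x. (laplacian m f x)^2)"
    apply (rule Bochner_Integration.integrable_bound[OF phi_props(4)[OF fL]])
    apply (subst meas_nu_iff, measurable)
    using bd by eventually_elim (auto intro: integral_nonneg)
  show "laplacian m f \<in> L2 nu" by (rule L2_I[OF lm li])
  have "(\<integral>x. (laplacian m f x)^2 \<partial>nu) \<le> (\<integral>x. (\<integral>y. (f y - f x)^2 \<partial>m x) \<partial>nu)"
    by (rule integral_mono_AE[OF li phi_props(4)[OF fL] bd])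
  then show "(\<integral>x. (laplacian m f x)^2 \<partial>nu) \<le> 2 * energy m nu f"
    unfolding energy_def by simp
qed

lemma sigma_borel: "sigma_sets UNIV (sets borel) = sets (borel :: 'a measure)"
  using sets.sigma_sets_eq[of "borel :: 'a measure"] by simp

lemma iter_sets: "sets (m_iter m n x) = sets borel"
proof (cases n)
  case 0 then show ?thesis by (simp add: mx(2))
next
  case (Suc k)
  have "sigma_sets (space borel) (sets borel) = sets (borel :: 'a measure)"
    by (rule sets.sigma_sets_eq)
  then show ?thesis using Suc by (simp add: sets_measure_of_conv)
qed

lemma space_iter[simp]: "space (m_iter m n x) = UNIV"
  using sets_eq_imp_space_eq[OF iter_sets[of n x]] by simp

lemma kern_iter: "m \<in> measurable (m_iter m n x) (subprob_algebra borel)"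
  using kern measurable_cong_sets[OF iter_sets[of n x] refl] by blast

lemma iter_bind: "m_iter m (Suc n) x = m_iter m n x \<bind> m"
proof -
  let ?B = "m_iter m n x \<bind> m"
  have sB: "sets ?B = sets borel"
    by (rule sets_bind[where N=borel]) (auto simp: mx(2))
  have spB: "space ?B = UNIV" using sets_eq_imp_space_eq[OF sB] by simp
  have "m_iter m (Suc n) x = measure_of UNIV (sets borel) (\<lambda>A. \<integral>\<^sup>+z. emeasure (m z) A \<partial>(m_iter m n x))"
    by simp
  also have "\<dots> = measure_of UNIV (sets borel) (emeasure ?B)"
  proof (rule measure_of_eq)
    show "sets borel \<subseteq> Pow UNIV" by simp
    fix a :: "'a set" assume "a \<in> sigma_sets UNIV (sets borel)"
    then have a: "a \<in> sets borel" by (simp add: sigma_borel)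
    show "(\<integral>\<^sup>+z. emeasure (m z) a \<partial>(m_iter m n x)) = emeasure ?B a"
      by (rule emeasure_bind[OF _ kern_iter a, symmetric]) simp
  qed
  also have "\<dots> = ?B"
    using measure_of_of_measure[of ?B] spB sB by simp
  finally show ?thesis .
qed

lemma iter_meas: "(\<lambda>x. m_iter m n x) \<in> measurable borel (subprob_algebra borel)"
proof (induction n)
  case 0 then show ?case using kern by simp
next
  case (Suc n)
  then show ?case unfolding iter_bind by (rule measurable_bind2[OF _ kern])
qed

lemma ergodic:
  fixes h :: "'a \<Rightarrow> real"
  assumes conn: "m_connected m nu" and hm[measurable]: "h \<in> borel_measurable borel"
    and inv: "AE x in nu. AE y in m x. h y = h x"
  shows "emeasure nu {x. 0 < h x} = 0 \<or> emeasure nu {x. h x \<le> 0} = 0"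
proof (cases "emeasure nu {x. 0 < h x} = 0")
  case True then show ?thesis by simp
next
  case False
  define D where "D = {x. 0 < h x}"
  have Db[measurable]: "D \<in> sets borel"
  proof -
    have "{x. h x \<le> 0} \<in> sets borel" by measurable
    moreover have "D = UNIV - {x. h x \<le> 0}" unfolding D_def by auto
    ultimately show ?thesis by auto
  qed
  have "emeasure nu D < \<infinity>"
    using finite_measure.emeasure_finite[OF F] by (simp add: less_top)
  then have Z: "emeasure nu {x. \<forall>n. emeasure (m_iter m n x) D = 0} = 0"
    using conn Db False unfolding m_connected_def D_def by (auto simp: zero_less_iff_neq_zero)
  have [measurable]: "(\<lambda>x. emeasure (m_iter m n x) D) \<in> borel_measurable borel" for n
    using measurable_compose[OF iter_meas measurable_emeasure_subprob_algebra[OF Db]] .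
  have Zb: "{x. \<forall>n. emeasure (m_iter m n x) D = 0} \<in> sets borel" by measurable
  from inv obtain N0 where N0: "{x \<in> space nu. \<not> (AE y in m x. h y = h x)} \<subseteq> N0"
      "emeasure nu N0 = 0" "N0 \<in> sets nu"
    by (rule AE_E)
  define Ns where "Ns = rec_nat N0 (\<lambda>_ A. A \<union> {x. emeasure (m x) A \<noteq> 0})"
  have Ns0: "Ns 0 = N0" and NsS: "Ns (Suc k) = Ns k \<union> {x. emeasure (m x) (Ns k) \<noteq> 0}" for k
    by (simp_all add: Ns_def)
  have Nsp: "Ns k \<in> sets borel \<and> emeasure nu (Ns k) = 0" for k
  proof (induction k)
    case 0 show ?case using N0 S by (simp add: Ns0)
  next
    case (Suc k)
    then have A: "Ns k \<in> sets borel" and A0: "emeasure nu (Ns k) = 0" by auto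
    have em[measurable]: "(\<lambda>x. emeasure (m x) (Ns k)) \<in> borel_measurable borel"
      using mrw A unfolding mrw_space_def by auto
    have Bb: "{x. emeasure (m x) (Ns k) \<noteq> 0} \<in> sets borel" by measurable
    have "(\<integral>\<^sup>+x. emeasure (m x) (Ns k) \<partial>nu) = 0"
      using I A A0 unfolding invariant_measure_def by auto
    then have "AE x in nu. emeasure (m x) (Ns k) = 0"
    proof -
      have emn: "(\<lambda>x. emeasure (m x) (Ns k)) \<in> borel_measurable nu" using em by (simp add: meas_nu_iff)
      show ?thesis using nn_integral_0_iff_AE[OF emn] \<open>(\<integral>\<^sup>+x. emeasure (m x) (Ns k) \<partial>nu) = 0\<close> by simp
    qed
    then have B0: "emeasure nu {x. emeasure (m x) (Ns k) \<noteq> 0} = 0"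
      using AE_iff_measurable[of "{x. emeasure (m x) (Ns k) \<noteq> 0}" nu "\<lambda>x. emeasure (m x) (Ns k) = 0"] Bb S
      by auto
    have "Ns k \<union> {x. emeasure (m x) (Ns k) \<noteq> 0} \<in> null_sets nu"
      using A A0 Bb B0 S by (intro null_sets.Un) auto
    then show ?case unfolding NsS using S by auto
  qed
  define Ninf where "Ninf = (\<Union>k. Ns k)"
  have Ninfb[measurable]: "Ninf \<in> sets borel" unfolding Ninf_def using Nsp by auto
  have Ninf0: "emeasure nu Ninf = 0" unfolding Ninf_def
    by (rule emeasure_UN_eq_0) (use Nsp S in auto)
  define W where "W = (UNIV - Ninf) \<inter> {x. h x \<le> 0}"
  have Wb: "W \<in> sets borel"
  proof -
    have "{x. h x \<le> 0} \<in> sets borel" by measurable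
    then show ?thesis unfolding W_def using Ninfb by auto
  qed
  have cWb: "UNIV - W \<in> sets borel" using Wb by auto
  have Wc: "emeasure (m x) (UNIV - W) = 0" if x: "x \<in> W" for x
  proof -
    have xN: "x \<notin> Ns k" for k using x unfolding W_def Ninf_def by auto
    have ae1: "AE y in m x. h y = h x" using xN[of 0] N0(1) Ns0 by auto
    have "emeasure (m x) (Ns k) = 0" for k using xN[of "Suc k"] NsS[of k] by auto
    then have "emeasure (m x) Ninf = 0" unfolding Ninf_def
      by (intro emeasure_UN_eq_0) (use Nsp mx(2) in auto)
    then have "AE y in m x. y \<notin> Ninf"
      by (intro AE_not_in) (use Ninfb mx(2) in auto)
    with ae1 have "AE y in m x. y \<in> W"
      by eventually_elim (use x in \<open>auto simp: W_def\<close>)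
    then show ?thesis
      using AE_iff_measurable[of "UNIV - W" "m x" "\<lambda>y. y \<in> W"] cWb mx(2) by auto
  qed
  have iterW: "emeasure (m_iter m n x) (UNIV - W) = 0" if x: "x \<in> W" for n x
  proof (induction n)
    case 0 then show ?case using Wc[OF x] by simp
  next
    case (Suc n)
    have ae: "AE z in m_iter m n x. z \<in> W"
      using AE_iff_measurable[of "UNIV - W" "m_iter m n x" "\<lambda>y. y \<in> W"] cWb iter_sets Suc by auto
    have "emeasure (m_iter m (Suc n) x) (UNIV - W) = (\<integral>\<^sup>+z. emeasure (m z) (UNIV - W) \<partial>m_iter m n x)"
      unfolding iter_bind by (rule emeasure_bind[OF _ kern_iter cWb]) simp
    also have "\<dots> = (\<integral>\<^sup>+z. 0 \<partial>m_iter m n x)"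
      by (rule nn_integral_cong_AE) (use ae Wc in \<open>auto elim: eventually_mono\<close>)
    finally show ?case by simp
  qed
  have sub: "UNIV - D \<subseteq> {x. \<forall>n. emeasure (m_iter m n x) D = 0} \<union> Ninf"
  proof
    fix x assume "x \<in> UNIV - D"
    show "x \<in> {x. \<forall>n. emeasure (m_iter m n x) D = 0} \<union> Ninf"
    proof (cases "x \<in> Ninf")
      case False
      then have xW: "x \<in> W" using \<open>x \<in> UNIV - D\<close> unfolding W_def D_def by auto
      have "D \<subseteq> UNIV - W" unfolding W_def D_def by auto
      then have "emeasure (m_iter m n x) D \<le> emeasure (m_iter m n x) (UNIV - W)" for n
        by (intro emeasure_mono) (use cWb iter_sets in auto)
      then show ?thesis using iterW[OF xW] by auto
    qed simp
  qed
  have "emeasure nu (UNIV - D) \<le> emeasure nu ({x. \<forall>n. emeasure (m_iter m n x) D = 0} \<union> Ninf)"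
    by (rule emeasure_mono[OF sub]) (use Zb Ninfb S in auto)
  also have "\<dots> \<le> emeasure nu {x. \<forall>n. emeasure (m_iter m n x) D = 0} + emeasure nu Ninf"
    by (rule emeasure_subadditive) (use Zb Ninfb S in auto)
  finally have "emeasure nu (UNIV - D) = 0" using Z Ninf0 by simp
  moreover have "UNIV - D = {x. h x \<le> 0}" unfolding D_def by auto
  ultimately show ?thesis by simp
qed

lemma ergodic0:
  assumes conn: "m_connected m nu" and hL: "h \<in> L2 nu"
    and inv: "AE x in nu. AE y in m x. h y = h x" and mean: "(\<integral>x. h x \<partial>nu) = 0"
  shows "AE x in nu. h x = 0"
proof -
  note hm[measurable] = L2_meas[OF hL]
  have hi: "integrable nu h" by (rule L2_int[OF hL])
  have s1: "{x. 0 < h x} \<in> sets nu" "{x. h x \<le> 0} \<in> sets nu" using S by auto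
  from ergodic[OF conn hm inv] show ?thesis
  proof
    assume "emeasure nu {x. 0 < h x} = 0"
    then have "AE x in nu. h x \<le> 0"
      using AE_iff_measurable[of "{x. 0 < h x}" nu "\<lambda>x. h x \<le> 0"] s1 by (auto simp: not_le)
    moreover have "(\<integral>x. - h x \<partial>nu) = 0" using mean by simp
    ultimately have "AE x in nu. - h x = 0"
      using integral_nonneg_eq_0_iff_AE[of nu "\<lambda>x. - h x"] hi by auto
    then show ?thesis by simp
  next
    assume "emeasure nu {x. h x \<le> 0} = 0"
    then have pos: "AE x in nu. 0 < h x"
      using AE_iff_measurable[of "{x. h x \<le> 0}" nu "\<lambda>x. 0 < h x"] s1 by (auto simp: not_less)
    then have "AE x in nu. 0 \<le> h x" by eventually_elim simp
    then have "AE x in nu. h x = 0"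
      using integral_nonneg_eq_0_iff_AE[of nu h] hi mean by auto
    with pos have "AE x in nu. False" by eventually_elim simp
    then show ?thesis using prob_space.AE_False[OF P] by simp
  qed
qed

lemma nu_int_const: "(\<integral>x. c \<partial>nu) = (c::real)"
  using prob_space.prob_space[OF P] by (simp add: lebesgue_integral_const)

lemma H0_L2: "f \<in> H0 nu \<Longrightarrow> f \<in> L2 nu" unfolding H0_def by auto

lemma H0_lin:
  assumes "f \<in> H0 nu" "g \<in> H0 nu"
  shows "(\<lambda>x. a * f x + b * g x) \<in> H0 nu"
proof -
  have fL: "f \<in> L2 nu" and gL: "g \<in> L2 nu" using assms H0_L2 by auto
  have "(\<integral>x. a * f x + b * g x \<partial>nu) = a * (\<integral>x. f x \<partial>nu) + b * (\<integral>x. g x \<partial>nu)"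
    using L2_int[OF fL] L2_int[OF gL] by simp
  then show ?thesis using assms L2_lin[OF fL gL] unfolding H0_def by simp
qed

lemma H0_neg: "f \<in> H0 nu \<Longrightarrow> (\<lambda>x. - f x) \<in> H0 nu"
  using H0_lin[of f f "-1" 0] by simp

lemma sq_nonneg: "0 \<le> (\<integral>x. ((f::'a\<Rightarrow>real) x)^2 \<partial>nu)"
  by (rule Bochner_Integration.integral_nonneg) simp

lemma sq_cong:
  assumes "f \<in> L2 nu" "g \<in> L2 nu" "AE x in nu. f x = g x"
  shows "(\<integral>x. (f x)^2 \<partial>nu) = (\<integral>x. (g x)^2 \<partial>nu)"
  apply (rule integral_cong_AE)
  using L2_sq[OF assms(1)] L2_sq[OF assms(2)] assms(3) by auto

lemma l2sq: "(l2norm nu f)^2 = (\<integral>x. (f x)^2 \<partial>nu)"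
  unfolding l2norm_def using sq_nonneg by simp

lemma bounded_sq:
  assumes "bounded_op_on nu T"
  shows "\<exists>C. \<forall>f\<in>H0 nu. (\<integral>x. (T f x)^2 \<partial>nu) \<le> C * (\<integral>x. (f x)^2 \<partial>nu)"
proof -
  obtain C where C: "\<forall>f\<in>H0 nu. l2norm nu (T f) \<le> C * l2norm nu f"
    using assms unfolding bounded_op_on_def by auto
  have "(\<integral>x. (T f x)^2 \<partial>nu) \<le> C^2 * (\<integral>x. (f x)^2 \<partial>nu)" if f: "f \<in> H0 nu" for f
  proof -
    have "(l2norm nu (T f))^2 \<le> (C * l2norm nu f)^2"
      by (rule power_mono) (use C f in \<open>auto simp: l2norm_def\<close>)
    then show ?thesis unfolding l2sq power_mult_distrib by simp
  qed
  then show ?thesis by blast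
qed

lemma unit_seq:
  assumes "spectral_gap m nu \<le> 0"
  shows "\<exists>u. \<forall>n. u n \<in> H0 nu \<and> (\<integral>x. (u n x)^2 \<partial>nu) = 1 \<and> energy m nu (u n) < inverse (real (Suc n))"
proof -
  have "\<exists>u. u \<in> H0 nu \<and> (\<integral>x. (u x)^2 \<partial>nu) = 1 \<and> energy m nu u < inverse (real (Suc n))" for n
  proof -
    have "spectral_gap m nu < ereal (inverse (real (Suc n)))"
      using assms by (rule le_less_trans) simp
    then obtain f where f: "f \<in> L2 nu" "variance_nu nu f \<noteq> 0"
        "ereal (energy m nu f / variance_nu nu f) < ereal (inverse (real (Suc n)))"
      unfolding spectral_gap_def by (auto simp: INF_less_iff)
    define c where "c = (\<integral>x. f x \<partial>nu)"
    define V where "V = variance_nu nu f"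
    have V: "V = (\<integral>x. (f x - c)^2 \<partial>nu)" unfolding V_def variance_nu_def c_def ..
    have "0 \<le> V" unfolding V by (rule Bochner_Integration.integral_nonneg) simp
    then have Vpos: "0 < V" using f(2) V_def by auto
    define a where "a = 1 / sqrt V"
    define u where "u = (\<lambda>x. a * (f x - c))"
    have e: "u = (\<lambda>x. a * f x + (- a * c) * 1)" unfolding u_def by (auto simp: algebra_simps)
    have uL: "u \<in> L2 nu" unfolding e by (rule L2_lin[OF f(1) L2_const])
    have "(\<integral>x. u x \<partial>nu) = a * (\<integral>x. f x - c \<partial>nu)" unfolding u_def by simp
    also have "(\<integral>x. f x - c \<partial>nu) = (\<integral>x. f x \<partial>nu) - (\<integral>x. c \<partial>nu)"
      by (rule Bochner_Integration.integral_diff[OF L2_int[OF f(1)] finite_measure.integrable_const[OF F]])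
    also have "a * ((\<integral>x. f x \<partial>nu) - (\<integral>x. c \<partial>nu)) = 0" unfolding nu_int_const c_def by simp
    finally have uH: "u \<in> H0 nu" using uL unfolding H0_def by simp
    have a2: "a^2 = 1 / V" unfolding a_def using Vpos by (simp add: power_divide)
    have "(\<integral>x. (u x)^2 \<partial>nu) = a^2 * V" unfolding u_def V by (simp add: power_mult_distrib)
    then have u1: "(\<integral>x. (u x)^2 \<partial>nu) = 1" using a2 Vpos by simp
    have "energy m nu u = energy m nu f / V" unfolding u_def energy_scale a2 by simp
    then have "energy m nu u < inverse (real (Suc n))" using f(3) V_def by simp
    then show ?thesis using uH u1 by blast
  qed
  then have "\<forall>n. \<exists>u. u \<in> H0 nu \<and> (\<integral>x. (u x)^2 \<partial>nu) = 1 \<and> energy m nu u < inverse (real (Suc n))" by blast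
  then show ?thesis by (rule choice)
qed

end

theorem proposition3p5:
  fixes m :: "'a::polish_space \<Rightarrow> 'a measure" and \<nu> :: "'a measure"
  assumes "mrw_space m"
    and "prob_space \<nu>" and "sets \<nu> = sets borel"
    and "invariant_measure m \<nu>" and "reversible_measure m \<nu>"
    and "m_connected m \<nu>"
    and "\<exists>S K. invertible_op_on \<nu> S \<and> compact_op_on \<nu> K \<and>
           (\<forall>f\<in>H0 \<nu>. AE x in \<nu>. - laplacian m f x = S f x + K f x)"
  shows "spectral_gap m \<nu> > 0"
proof -
  interpret mrw m \<nu> by (rule mrw.intro[OF assms(1-4)])
  obtain S K where SK: "invertible_op_on \<nu> S" "compact_op_on \<nu> K"
      "\<forall>f\<in>H0 \<nu>. AE x in \<nu>. - laplacian m f x = S f x + K f x"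
    using assms(7) by blast
  obtain R where R: "bounded_op_on \<nu> R"
      "\<forall>f\<in>H0 \<nu>. (AE x in \<nu>. R (S f) x = f x) \<and> (AE x in \<nu>. S (R f) x = f x)"
    using SK(1) unfolding invertible_op_on_def by blast
  have Sb: "bounded_op_on \<nu> S" using SK(1) unfolding invertible_op_on_def by blast
  have Kb: "bounded_op_on \<nu> K" using SK(2) unfolding compact_op_on_def by blast
  have SH: "\<And>f. f \<in> H0 \<nu> \<Longrightarrow> S f \<in> H0 \<nu>" using Sb unfolding bounded_op_on_def by blast
  have KH: "\<And>f. f \<in> H0 \<nu> \<Longrightarrow> K f \<in> H0 \<nu>" using Kb unfolding bounded_op_on_def by blast
  have RH: "\<And>f. f \<in> H0 \<nu> \<Longrightarrow> R f \<in> H0 \<nu>" using R(1) unfolding bounded_op_on_def by blast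
  have Rlin: "\<And>f g a b. f \<in> H0 \<nu> \<Longrightarrow> g \<in> H0 \<nu> \<Longrightarrow>
      AE x in \<nu>. R (\<lambda>y. a * f y + b * g y) x = a * R f x + b * R g x"
    using R(1) unfolding bounded_op_on_def by blast
  obtain C where C: "\<And>f. f \<in> H0 \<nu> \<Longrightarrow> (\<integral>x. (R f x)^2 \<partial>\<nu>) \<le> C * (\<integral>x. (f x)^2 \<partial>\<nu>)"
    using bounded_sq[OF R(1)] by blast
  show ?thesis
  proof (rule ccontr)
    assume "\<not> spectral_gap m \<nu> > 0"
    then have "spectral_gap m \<nu> \<le> 0" by (simp add: not_less)
    then obtain u where u: "\<And>n. u n \<in> H0 \<nu> \<and> (\<integral>x. (u n x)^2 \<partial>\<nu>) = 1 \<and>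
        energy m \<nu> (u n) < inverse (real (Suc n))"
      using unit_seq by blast
    have "\<exists>B. \<forall>n. l2norm \<nu> (u n) \<le> B"
      by (intro exI[of _ 1]) (simp add: l2norm_def u)
    then have "\<exists>r g. strict_mono r \<and> g \<in> H0 \<nu> \<and>
           (\<lambda>n. l2norm \<nu> (\<lambda>x. K (u (r n)) x - g x)) \<longlonglongrightarrow> 0"
      using SK(2) u unfolding compact_op_on_def by blast
    then obtain r g where rg: "strict_mono r" "g \<in> H0 \<nu>"
        "(\<lambda>n. l2norm \<nu> (\<lambda>x. K (u (r n)) x - g x)) \<longlonglongrightarrow> 0"
      by blast
    define v where "v n = u (r n)" for n
    have vH: "v n \<in> H0 \<nu>" and v1: "(\<integral>x. (v n x)^2 \<partial>\<nu>) = 1" for n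
      unfolding v_def using u by auto
    have vL: "v n \<in> L2 \<nu>" for n using H0_L2[OF vH] .
    have gL: "g \<in> L2 \<nu>" using H0_L2[OF rg(2)] .
    have eu: "(\<lambda>n. energy m \<nu> (u n)) \<longlonglongrightarrow> 0"
    proof (rule tendsto_sandwich[where f="\<lambda>_. 0" and h="\<lambda>n. inverse (real (Suc n))"])
      show "\<forall>\<^sub>F n in sequentially. 0 \<le> energy m \<nu> (u n)" by (simp add: energy_nonneg)
      show "\<forall>\<^sub>F n in sequentially. energy m \<nu> (u n) \<le> inverse (real (Suc n))"
        using u by (simp add: less_imp_le)
    qed (rule tendsto_const LIMSEQ_inverse_real_of_nat)+
    have ev: "(\<lambda>n. energy m \<nu> (v n)) \<longlonglongrightarrow> 0"
      using LIMSEQ_subseq_LIMSEQ[OF eu rg(1)] unfolding v_def comp_def .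
    have kg: "(\<lambda>n. (\<integral>x. (K (v n) x - g x)^2 \<partial>\<nu>)) \<longlonglongrightarrow> 0"
      using tendsto_power[OF rg(3), of 2] unfolding l2sq v_def by simp
    define w where "w n = (\<lambda>y. 1 * S (v n) y + 1 * g y)" for n
    have wH: "w n \<in> H0 \<nu>" for n unfolding w_def by (rule H0_lin[OF SH[OF vH] rg(2)])
    have wsq: "(\<integral>x. (w n x)^2 \<partial>\<nu>) \<le> 2 * (2 * energy m \<nu> (v n)) + 2 * (\<integral>x. (K (v n) x - g x)^2 \<partial>\<nu>)" for n
    proof -
      have lapL: "laplacian m (v n) \<in> L2 \<nu>" by (rule lap_props(1)[OF vL])
      have L1: "(\<lambda>x. - laplacian m (v n) x) \<in> L2 \<nu>" by (rule L2_neg[OF lapL])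
      have L2': "(\<lambda>x. - (K (v n) x - g x)) \<in> L2 \<nu>"
        by (rule L2_neg[OF L2_diff[OF H0_L2[OF KH[OF vH]] gL]])
      have ae: "AE x in \<nu>. w n x = - laplacian m (v n) x + - (K (v n) x - g x)"
        using SK(3) vH[of n] by (auto simp: w_def elim!: eventually_mono)
      have "(\<integral>x. (w n x)^2 \<partial>\<nu>) = (\<integral>x. (- laplacian m (v n) x + - (K (v n) x - g x))^2 \<partial>\<nu>)"
        by (rule sq_cong[OF H0_L2[OF wH] L2_add[OF L1 L2'] ae])
      also have "\<dots> \<le> 2 * (\<integral>x. (- laplacian m (v n) x)^2 \<partial>\<nu>) + 2 * (\<integral>x. (- (K (v n) x - g x))^2 \<partial>\<nu>)"
        by (rule sq_add[OF L1 L2'])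
      also have "\<dots> = 2 * (\<integral>x. (laplacian m (v n) x)^2 \<partial>\<nu>) + 2 * (\<integral>x. (K (v n) x - g x)^2 \<partial>\<nu>)"
        by (simp add: power2_commute)
      also have "\<dots> \<le> 2 * (2 * energy m \<nu> (v n)) + 2 * (\<integral>x. (K (v n) x - g x)^2 \<partial>\<nu>)"
        using lap_props(2)[OF vL] by simp
      finally show ?thesis .
    qed
    have blim: "(\<lambda>n. 2 * (2 * energy m \<nu> (v n)) + 2 * (\<integral>x. (K (v n) x - g x)^2 \<partial>\<nu>)) \<longlonglongrightarrow> 2 * (2 * 0) + 2 * 0"
      by (intro tendsto_intros ev kg)
    have wlim: "(\<lambda>n. (\<integral>x. (w n x)^2 \<partial>\<nu>)) \<longlonglongrightarrow> 0"
    proof (rule tendsto_sandwich[where f="\<lambda>_. 0"])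
      show "\<forall>\<^sub>F n in sequentially. 0 \<le> (\<integral>x. (w n x)^2 \<partial>\<nu>)" by (simp add: sq_nonneg)
      show "\<forall>\<^sub>F n in sequentially. (\<integral>x. (w n x)^2 \<partial>\<nu>) \<le> 2 * (2 * energy m \<nu> (v n)) + 2 * (\<integral>x. (K (v n) x - g x)^2 \<partial>\<nu>)"
        using wsq by simp
    qed (use blim in simp_all)
    define h where "h = (\<lambda>x. - R g x)"
    have hH: "h \<in> H0 \<nu>" unfolding h_def by (rule H0_neg[OF RH[OF rg(2)]])
    have hL: "h \<in> L2 \<nu>" using H0_L2[OF hH] .
    have vh: "(\<integral>x. (v n x - h x)^2 \<partial>\<nu>) \<le> C * (\<integral>x. (w n x)^2 \<partial>\<nu>)" for n
    proof -
      have ae: "AE x in \<nu>. R (w n) x = v n x - h x"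
      proof -
        have a1: "AE x in \<nu>. R (\<lambda>y. 1 * S (v n) y + 1 * g y) x = 1 * R (S (v n)) x + 1 * R g x"
          by (rule Rlin[OF SH[OF vH[of n]] rg(2)])
        have a2: "AE x in \<nu>. R (S (v n)) x = v n x" using R(2) vH[of n] by blast
        from a1 a2 show ?thesis by eventually_elim (simp add: w_def h_def)
      qed
      have "(\<integral>x. (v n x - h x)^2 \<partial>\<nu>) = (\<integral>x. (R (w n) x)^2 \<partial>\<nu>)"
        by (rule sq_cong[OF L2_diff[OF vL hL] H0_L2[OF RH[OF wH]]]) (use ae in \<open>auto elim: eventually_mono\<close>)
      also have "\<dots> \<le> C * (\<integral>x. (w n x)^2 \<partial>\<nu>)" by (rule C[OF wH])
      finally show ?thesis .
    qed
    have vhlim: "(\<lambda>n. (\<integral>x. (v n x - h x)^2 \<partial>\<nu>)) \<longlonglongrightarrow> 0"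
    proof (rule tendsto_sandwich[where f="\<lambda>_. 0" and h="\<lambda>n. C * (\<integral>x. (w n x)^2 \<partial>\<nu>)"])
      show "\<forall>\<^sub>F n in sequentially. 0 \<le> (\<integral>x. (v n x - h x)^2 \<partial>\<nu>)" by (simp add: sq_nonneg)
      show "\<forall>\<^sub>F n in sequentially. (\<integral>x. (v n x - h x)^2 \<partial>\<nu>) \<le> C * (\<integral>x. (w n x)^2 \<partial>\<nu>)"
        using vh by simp
      show "(\<lambda>n. C * (\<integral>x. (w n x)^2 \<partial>\<nu>)) \<longlonglongrightarrow> 0"
        using tendsto_mult[OF tendsto_const wlim, of C] by simp
    qed simp
    have eh_bd: "energy m \<nu> h \<le> 4 * (\<integral>x. (v n x - h x)^2 \<partial>\<nu>) + 2 * energy m \<nu> (v n)" for n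
    proof -
      have d: "(\<lambda>x. h x - v n x) \<in> L2 \<nu>" by (rule L2_diff[OF hL vL])
      have "energy m \<nu> (\<lambda>x. (h x - v n x) + v n x) \<le> 2 * energy m \<nu> (\<lambda>x. h x - v n x) + 2 * energy m \<nu> (v n)"
        by (rule energy_add[OF d vL])
      moreover have "energy m \<nu> (\<lambda>x. h x - v n x) \<le> 2 * (\<integral>x. (h x - v n x)^2 \<partial>\<nu>)"
        by (rule energy_le[OF d])
      moreover have "(\<integral>x. (h x - v n x)^2 \<partial>\<nu>) = (\<integral>x. (v n x - h x)^2 \<partial>\<nu>)"
        by (simp add: power2_commute)
      ultimately show ?thesis by simp
    qed
    have "energy m \<nu> h \<le> 4 * 0 + 2 * 0"
    proof (rule tendsto_le[OF trivial_limit_sequentially])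
      show "(\<lambda>n. 4 * (\<integral>x. (v n x - h x)^2 \<partial>\<nu>) + 2 * energy m \<nu> (v n)) \<longlonglongrightarrow> 4 * 0 + 2 * 0"
        by (intro tendsto_intros vhlim ev)
      show "(\<lambda>n. energy m \<nu> h) \<longlonglongrightarrow> energy m \<nu> h" by simp
      show "\<forall>\<^sub>F n in sequentially. energy m \<nu> h \<le> 4 * (\<integral>x. (v n x - h x)^2 \<partial>\<nu>) + 2 * energy m \<nu> (v n)"
        using eh_bd by simp
    qed
    then have eh: "energy m \<nu> h = 0" using energy_nonneg[of h] by simp
    have h0: "AE x in \<nu>. h x = 0"
      using ergodic0[OF assms(6) hL energy_zero[OF hL eh]] hH unfolding H0_def by simp
    have hsq: "(\<integral>x. (h x)^2 \<partial>\<nu>) = 0"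
      using sq_cong[OF hL L2_const[of 0] h0] by simp
    obtain N where N: "(\<integral>x. (v N x - h x)^2 \<partial>\<nu>) < 1/2"
      using order_tendstoD(2)[OF vhlim, of "1/2"] by (auto simp: eventually_sequentially)
    have "(\<integral>x. ((v N x - h x) + h x)^2 \<partial>\<nu>) \<le> 2 * (\<integral>x. (v N x - h x)^2 \<partial>\<nu>) + 2 * (\<integral>x. (h x)^2 \<partial>\<nu>)"
      by (rule sq_add[OF L2_diff[OF vL hL] hL])
    then have "1 \<le> 2 * (\<integral>x. (v N x - h x)^2 \<partial>\<nu>)" using v1[of N] hsq by simp
    then show False using N by simp
  qed
qed

end
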